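(* Let $P$ be a Delzant polyhedron, $v$ a weight with $(v,w)\in\mathcal W(P)$, and let $\mathbf H=(H_{ij})$ satisfy the conditions defining $\mathcal H^\varepsilon_{\alpha,T}$. Then there is $C>0$ such that for all $i,j$, $$\sup_P\Big(v^{\varepsilon-1}\sum_k|(vH_{ij})_k|\Big)<C,$$ and in particular for every $j$, $\sup_P\big(v^{\varepsilon-1}\sum_i|(vH_{ij})_i|\big)<C$.
   Context: $\mathfrak t^*\cong\mathbb R^n$; $P$ a Delzant polyhedron (possibly unbounded); $P_\delta$ the inner parallel polyhedron at distance $\delta$; $\mathbf H=(H_{ij})$ a positive-definite matrix-valued function on $P$ (e.g. $(\mathrm{Hess}\,u)^{-1}$ for the symplectic potential $u$ of an AK metric); subscripts denote $x$-derivatives. $\mathcal W(P)$: $v>0$ smooth on $\overline P$, $|v|\le C_1e^{-C_2|x|}$, $\sum_{|a|\le k}|v^{-1}\partial^av|\le C(k)$; and $\sum_{|a|\le k}\sup|v^{-\beta^*}\partial^aw|\le C_3(k)$ for some $\beta^*>0$. Conditions of $\mathcal H^\varepsilon_{\alpha,T}$ ($\varepsilon\in[0,\min\{\beta^*,\frac12\})$): (1) $\sup_Pv^\varepsilon\|\mathbf H\|^2<\infty$; (2) $\sup_Pv^\varepsilon\sum_{i,j,k}|\partial_kH_{ij}|^2<\infty$; (3) $|\partial_k\partial_lH_{ij}|^2<C$ on $\overline P\setminus P_{\bar\delta}$ for some $\bar\delta>0$; (4) $\sup|v^\varepsilon u|<\infty$ on $\overline P$ and $\sum_{|a|\le2}\sup_{P_\delta}|v^\varepsilon\partial^au|<\infty$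 for small $\delta$, where $\mathbf H=(\mathrm{Hess}\,u)^{-1}$. *)

theory Defs
  imports "HOL-Analysis.Analysis"
begin

text \<open>Points of t* = R^n are vectors of type real^'n.
  Partial derivative of a real function in the k-th coordinate direction.\<close>
definition pd :: "'n::finite \<Rightarrow> (real^'n \<Rightarrow> real) \<Rightarrow> real^'n \<Rightarrow> real" where
  "pd k f x = deriv (\<lambda>t. f (x + t *\<^sub>R axis k 1)) 0"

text \<open>Iterated partial derivative along a list of coordinate directions
  (a multi-index; lists of length at most k cover all derivatives of order at most k).\<close>
fun pds :: "'n::finite list \<Rightarrow> (real^'n \<Rightarrow> real) \<Rightarrow> real^'n \<Rightarrow> real" where
  "pds [] f = f"
| "pds (i # is) f = pd i (pds is f)"

definition smooth_on :: "(real^'n::finite) set \<Rightarrow> (real^'n \<Rightarrow> real) \<Rightarrow> bool" where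
  "smooth_on U f \<longleftrightarrow> (\<forall>is. \<forall>x\<in>U. pds is f differentiable (at x))"

definition hess :: "(real^'n::finite \<Rightarrow> real) \<Rightarrow> real^'n \<Rightarrow> real^'n^'n" where
  "hess f x = (\<chi> i j. pds [i, j] f x)"

text \<open>Delzant polyhedron (possibly unbounded), as a closed set:
  P = {x. l_a(x) = <u_a,x> - lambda_a \<ge> 0, a < d}, with nonempty interior,
  integral normals u_a, each inequality defining a facet (irredundancy), and
  smoothness: at every point of P the normals of the active facets are part of
  a Z-basis of Z^n.\<close>
definition delzant_polyhedron :: "(real^'n::finite) set \<Rightarrow> bool" where
  "delzant_polyhedron P \<longleftrightarrow>
    (\<exists>(d::nat) (u::nat \<Rightarrow> real^'n) (lam::nat \<Rightarrow> real).
       P = {x. \<forall>a<d. lam a \<le> u a \<bullet> x} \<and>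
       interior P \<noteq> {} \<and>
       (\<forall>a<d. \<forall>i. u a $ i \<in> \<int>) \<and>
       (\<forall>a<d. \<exists>x\<in>P. u a \<bullet> x = lam a \<and> (\<forall>b<d. b \<noteq> a \<longrightarrow> lam b < u b \<bullet> x)) \<and>
       (\<forall>x\<in>P. \<exists>e::'n \<Rightarrow> real^'n.
          (\<forall>i j. e i $ j \<in> \<int>) \<and> \<bar>det (\<chi> i. e i)\<bar> = 1 \<and>
          {u a | a. a < d \<and> u a \<bullet> x = lam a} \<subseteq> range e))"

definition inner_parallel :: "(real^'n::finite) set \<Rightarrow> real \<Rightarrow> (real^'n) set" where
  "inner_parallel P \<delta> = {x. cball x \<delta> \<subseteq> P}"

end

theory Submission
  imports Defs
begin

lemma line_deriv:
  fixes f :: "real^'n::finite \<Rightarrow> real"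
  assumes "f differentiable (at x)"
  shows "\<exists>D. ((\<lambda>t. f (x + t *\<^sub>R a)) has_real_derivative D) (at 0)"
proof -
  obtain f' where f': "(f has_derivative f') (at x)" using assms differentiable_def by blast
  have l: "((\<lambda>t. x + t *\<^sub>R a) has_derivative (\<lambda>t. t *\<^sub>R a)) (at 0)"
    by (auto intro!: derivative_eq_intros)
  have "((\<lambda>t. f (x + t *\<^sub>R a)) has_derivative (\<lambda>t. f' (t *\<^sub>R a))) (at 0)"
    using has_derivative_compose[OF l] f' by (simp add: o_def)
  moreover have "(\<lambda>t. f' (t *\<^sub>R a)) = (\<lambda>t. t * f' a)"
    using linear_scale[OF has_derivative_linear[OF f']] by auto
  ultimately have "((\<lambda>t. f (x + t *\<^sub>R a)) has_derivative (\<lambda>t. f' a * t)) (at 0)"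
    by (simp add: mult.commute)
  then show ?thesis by (auto simp: has_field_derivative_def)
qed

lemma pd_mult:
  fixes f g :: "real^'n::finite \<Rightarrow> real"
  assumes "f differentiable (at x)" "g differentiable (at x)"
  shows "pd k (\<lambda>y. f y * g y) x = pd k f x * g x + f x * pd k g x"
proof -
  obtain D where D: "((\<lambda>t. f (x + t *\<^sub>R axis k 1)) has_real_derivative D) (at 0)"
    using line_deriv[OF assms(1)] by blast
  obtain E where E: "((\<lambda>t. g (x + t *\<^sub>R axis k 1)) has_real_derivative E) (at 0)"
    using line_deriv[OF assms(2)] by blast
  have "((\<lambda>t. f (x + t *\<^sub>R axis k 1) * g (x + t *\<^sub>R axis k 1)) has_real_derivative
      (D * g x + f x * E)) (at 0)"
    using DERIV_mult[OF D E] by (simp add: mult.commute)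
  then show ?thesis using D E unfolding pd_def by (simp add: DERIV_imp_deriv)
qed

theorem lemma3p5:
  fixes P :: "(real^'n::finite) set"
    and v w u :: "real^'n \<Rightarrow> real"
    and H :: "real^'n \<Rightarrow> real^'n^'n"
    and \<epsilon> \<beta> :: real
  assumes delzant: "delzant_polyhedron P"
    \<comment> \<open>(v,w) in W(P)\<close>
    and v_pos: "\<forall>x\<in>P. 0 < v x"
    and v_smooth: "\<exists>U. open U \<and> P \<subseteq> U \<and> smooth_on U v"
    and v_decay: "\<exists>C1 C2. 0 < C1 \<and> 0 < C2 \<and> (\<forall>x\<in>P. \<bar>v x\<bar> \<le> C1 * exp (- C2 * norm x))"
    and v_log: "\<forall>k. \<exists>C. \<forall>x\<in>P. (\<Sum>is\<in>{is::'n list. length is \<le> k}. \<bar>pds is v x / v x\<bar>) \<le> C"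
    and w_smooth: "\<exists>U. open U \<and> P \<subseteq> U \<and> smooth_on U w"
    and beta_pos: "0 < \<beta>"
    and w_bd: "\<forall>k. \<exists>C. \<forall>is::'n list. length is \<le> k \<longrightarrow>
                 (\<forall>x\<in>P. \<bar>v x powr (- \<beta>) * pds is w x\<bar> \<le> C)"
    \<comment> \<open>range of epsilon\<close>
    and eps_nonneg: "0 \<le> \<epsilon>"
    and eps_less: "\<epsilon> < min \<beta> (1/2)"
    \<comment> \<open>H positive definite, H = (Hess u)^(-1), smooth\<close>
    and H_posdef: "\<forall>x\<in>interior P. transpose (H x) = H x \<and>
                     (\<forall>\<xi>. \<xi> \<noteq> 0 \<longrightarrow> 0 < \<xi> \<bullet> (H x *v \<xi>))"
    and u_smooth: "smooth_on (interior P) u"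
    and H_hess: "\<forall>x\<in>interior P. invertible (hess u x) \<and> H x = matrix_inv (hess u x)"
    and H_smooth: "\<forall>i j. smooth_on (interior P) (\<lambda>y. H y $ i $ j)"
    \<comment> \<open>condition (1)\<close>
    and cond1: "\<exists>C. \<forall>x\<in>interior P. v x powr \<epsilon> * (norm (H x))\<^sup>2 \<le> C"
    \<comment> \<open>condition (2)\<close>
    and cond2: "\<exists>C. \<forall>x\<in>interior P.
                  v x powr \<epsilon> * (\<Sum>i\<in>UNIV. \<Sum>j\<in>UNIV. \<Sum>k\<in>UNIV. (pd k (\<lambda>y. H y $ i $ j) x)\<^sup>2) \<le> C"
    \<comment> \<open>condition (3)\<close>
    and cond3: "\<exists>\<delta>b>0. \<exists>C. \<forall>x\<in>interior P - inner_parallel P \<delta>b. \<forall>i j k l.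
                  (pds [k, l] (\<lambda>y. H y $ i $ j) x)\<^sup>2 < C"
    \<comment> \<open>condition (4)\<close>
    and cond4a: "\<exists>C. \<forall>x\<in>P. \<bar>v x powr \<epsilon> * u x\<bar> \<le> C"
    and cond4b: "\<exists>\<delta>0>0. \<forall>\<delta>. 0 < \<delta> \<and> \<delta> < \<delta>0 \<longrightarrow>
                  (\<exists>C. \<forall>x\<in>inner_parallel P \<delta>.
                     (\<Sum>is\<in>{is::'n list. length is \<le> 2}. \<bar>v x powr \<epsilon> * pds is u x\<bar>) \<le> C)"
  shows "\<exists>C>0.
           (\<forall>i j. \<forall>x\<in>interior P.
              v x powr (\<epsilon> - 1) * (\<Sum>k\<in>UNIV. \<bar>pd k (\<lambda>y. v y * H y $ i $ j) x\<bar>) < C) \<and>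
           (\<forall>j. \<forall>x\<in>interior P.
              v x powr (\<epsilon> - 1) * (\<Sum>i\<in>UNIV. \<bar>pd i (\<lambda>y. v y * H y $ i $ j) x\<bar>) < C)"
proof -
  obtain C1 C2 where C1: "0 < C1" and dec: "\<forall>x\<in>P. \<bar>v x\<bar> \<le> C1 * exp (- C2 * norm x)" and "0 < C2"
    using v_decay by blast
  have vle: "v x \<le> C1" if "x \<in> P" for x
  proof -
    have "exp (- C2 * norm x) \<le> 1" using \<open>0 < C2\<close> by simp
    hence "C1 * exp (- C2 * norm x) \<le> C1" using C1 by (simp add: mult_left_le)
    thus ?thesis using dec that by (meson abs_ge_self order_trans)
  qed
  obtain L where L: "\<forall>x\<in>P. (\<Sum>is\<in>{is::'n list. length is \<le> 1}. \<bar>pds is v x / v x\<bar>) \<le> L"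
    using v_log by blast
  have fin: "finite {is::'n list. length is \<le> 1}"
  proof -
    have "{is::'n list. length is \<le> 1} = {xs. set xs \<subseteq> UNIV \<and> length xs \<le> 1}" by simp
    thus ?thesis using finite_lists_length_le[of "UNIV::'n set" 1] by simp
  qed
  have dv: "\<bar>pd k v x\<bar> \<le> L * v x" if "x \<in> P" for x k
  proof -
    have "\<bar>pds [k] v x / v x\<bar> \<le> (\<Sum>is\<in>{is::'n list. length is \<le> 1}. \<bar>pds is v x / v x\<bar>)"
      by (rule member_le_sum[OF _ _ fin]) auto
    moreover have "0 < v x" using v_pos that by auto
    ultimately have "\<bar>pd k v x / v x\<bar> \<le> L" using L that by (simp only: pds.simps) force
    hence "\<bar>pd k v x\<bar> / v x \<le> L" using \<open>0 < v x\<close> by (simp add: abs_divide)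
    thus ?thesis using v_pos that by (simp add: divide_le_eq)
  qed
  obtain K1 where K1: "\<forall>x\<in>interior P. v x powr \<epsilon> * (norm (H x))\<^sup>2 \<le> K1" using cond1 by blast
  obtain K2 where K2: "\<forall>x\<in>interior P.
      v x powr \<epsilon> * (\<Sum>i\<in>UNIV. \<Sum>j\<in>UNIV. \<Sum>k\<in>UNIV. (pd k (\<lambda>y. H y $ i $ j) x)\<^sup>2) \<le> K2"
    using cond2 by blast
  obtain U where U: "open U" "P \<subseteq> U" "smooth_on U v" using v_smooth by blast
  define A where "A = C1 powr \<epsilon>"
  define B where "B = \<bar>L\<bar> * (1 + A * K1) + (1 + A * K2)"
  have key: "v x powr (\<epsilon> - 1) * \<bar>pd k (\<lambda>y. v y * H y $ i $ j) x\<bar> \<le> B"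
    if x: "x \<in> interior P" for x i j k
  proof -
    have xP: "x \<in> P" using x interior_subset by blast
    define a where "a = v x"
    have a: "0 < a" using v_pos xP a_def by auto
    have aC: "a \<le> C1" using vle xP a_def by auto
    have aeA: "a powr \<epsilon> \<le> A" unfolding A_def using a aC eps_nonneg by (simp add: powr_mono2)
    have ae0: "0 \<le> a powr \<epsilon>" by simp
    have vd: "v differentiable (at x)" using U xP unfolding smooth_on_def
      by (metis pds.simps(1) subsetD)
    have hd: "(\<lambda>y. H y $ i $ j) differentiable (at x)" using H_smooth x unfolding smooth_on_def
      by (metis pds.simps(1))
    define h where "h = H x $ i $ j"
    define hk where "hk = pd k (\<lambda>y. H y $ i $ j) x"
    define d where "d = pd k v x"
    have eq: "pd k (\<lambda>y. v y * H y $ i $ j) x = d * h + a * hk"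
      using pd_mult[OF vd hd] unfolding d_def h_def a_def hk_def by simp
    have dle: "\<bar>d\<bar> \<le> \<bar>L\<bar> * a"
    proof -
      have "L * a \<le> \<bar>L\<bar> * a" using a by (intro mult_right_mono) auto
      thus ?thesis using dv[OF xP, of k] unfolding d_def a_def by linarith
    qed
    have hn: "\<bar>h\<bar> \<le> norm (H x)"
    proof -
      have "\<bar>H x $ i $ j\<bar> \<le> norm (H x $ i)" by (rule component_le_norm_cart)
      moreover have "norm (H x $ i) \<le> norm (H x)" by (rule Finite_Cartesian_Product.norm_nth_le)
      ultimately show ?thesis unfolding h_def by linarith
    qed
    have h2: "h\<^sup>2 \<le> (norm (H x))\<^sup>2" using hn by (metis abs_ge_zero power2_abs power_mono)
    have ah2: "a powr \<epsilon> * h\<^sup>2 \<le> K1"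
      using K1 x h2 ae0 unfolding a_def by (meson mult_left_mono order_trans)
    have hk2: "hk\<^sup>2 \<le> (\<Sum>i\<in>UNIV. \<Sum>j\<in>UNIV. \<Sum>k\<in>UNIV. (pd k (\<lambda>y. H y $ i $ j) x)\<^sup>2)"
    proof -
      have "hk\<^sup>2 \<le> (\<Sum>k\<in>UNIV. (pd k (\<lambda>y. H y $ i $ j) x)\<^sup>2)"
        unfolding hk_def by (rule member_le_sum) auto
      also have "\<dots> \<le> (\<Sum>j\<in>UNIV. \<Sum>k\<in>UNIV. (pd k (\<lambda>y. H y $ i $ j) x)\<^sup>2)"
        by (rule member_le_sum[where f="\<lambda>j. \<Sum>k\<in>UNIV. (pd k (\<lambda>y. H y $ i $ j) x)\<^sup>2"])
           (auto intro!: sum_nonneg)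
      also have "\<dots> \<le> (\<Sum>i\<in>UNIV. \<Sum>j\<in>UNIV. \<Sum>k\<in>UNIV. (pd k (\<lambda>y. H y $ i $ j) x)\<^sup>2)"
        by (rule member_le_sum[where f="\<lambda>i. \<Sum>j\<in>UNIV. \<Sum>k\<in>UNIV. (pd k (\<lambda>y. H y $ i $ j) x)\<^sup>2"])
           (auto intro!: sum_nonneg)
      finally show ?thesis .
    qed
    have ahk2: "a powr \<epsilon> * hk\<^sup>2 \<le> K2"
      using K2 x hk2 ae0 unfolding a_def by (meson mult_left_mono order_trans)
    have sq: "a powr \<epsilon> * \<bar>y\<bar> \<le> 1 + A * K" if "a powr \<epsilon> * y\<^sup>2 \<le> K" for y K
    proof -
      have "a powr \<epsilon> * \<bar>y\<bar> \<le> 1 + (a powr \<epsilon> * \<bar>y\<bar>)\<^sup>2"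
      proof -
        have "z \<le> 1 + z\<^sup>2" for z :: real
        proof (cases "z \<le> 1")
          case True thus ?thesis using zero_le_power2[of z] by linarith
        next
          case False
          hence "z * 1 \<le> z * z" by (intro mult_left_mono) auto
          thus ?thesis by (simp add: power2_eq_square)
        qed
        thus ?thesis .
      qed
      also have "(a powr \<epsilon> * \<bar>y\<bar>)\<^sup>2 = a powr \<epsilon> * (a powr \<epsilon> * y\<^sup>2)"
        by (simp add: power2_eq_square)
      also have "\<dots> \<le> A * K"
        using aeA ae0 that by (meson mult_mono order_trans zero_le_power2 mult_nonneg_nonneg)
      finally show ?thesis by simp
    qed
    have p1: "a powr (\<epsilon> - 1) * a = a powr \<epsilon>"
      using a by (simp add: powr_diff)
    have "a powr (\<epsilon> - 1) * \<bar>d * h + a * hk\<bar> \<le> a powr (\<epsilon> - 1) * (\<bar>L\<bar> * a * \<bar>h\<bar> + a * \<bar>hk\<bar>)"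
    proof (rule mult_left_mono)
      have "\<bar>d * h\<bar> \<le> \<bar>L\<bar> * a * \<bar>h\<bar>" using dle by (simp add: abs_mult mult_right_mono)
      thus "\<bar>d * h + a * hk\<bar> \<le> \<bar>L\<bar> * a * \<bar>h\<bar> + a * \<bar>hk\<bar>" using a
        using abs_triangle_ineq[of "d * h" "a * hk"] by (simp add: abs_mult)
    qed simp
    also have "\<dots> = \<bar>L\<bar> * (a powr \<epsilon> * \<bar>h\<bar>) + a powr \<epsilon> * \<bar>hk\<bar>"
    proof -
      have "a powr (\<epsilon> - 1) * (\<bar>L\<bar> * a * \<bar>h\<bar> + a * \<bar>hk\<bar>)
          = \<bar>L\<bar> * ((a powr (\<epsilon> - 1) * a) * \<bar>h\<bar>) + (a powr (\<epsilon> - 1) * a) * \<bar>hk\<bar>"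
        by (simp add: algebra_simps)
      thus ?thesis unfolding p1 .
    qed
    also have "\<dots> \<le> \<bar>L\<bar> * (1 + A * K1) + (1 + A * K2)"
      using sq[OF ah2] sq[OF ahk2] by (meson abs_ge_zero add_mono mult_left_mono)
    finally show ?thesis using eq unfolding B_def a_def by simp
  qed
  define C where "C = real CARD('n) * B + 1"
  have B0: "0 \<le> B"
  proof -
    have "interior P \<noteq> {}" using delzant unfolding delzant_polyhedron_def by blast
    then obtain x0 where x0: "x0 \<in> interior P" by blast
    have "0 \<le> v x0 powr (\<epsilon> - 1) * \<bar>pd undefined (\<lambda>y. v y * H y $ undefined $ undefined) x0\<bar>"
      by simp
    thus ?thesis using key[OF x0, of undefined undefined undefined] by linarith
  qed
  have S1: "v x powr (\<epsilon> - 1) * (\<Sum>k\<in>UNIV. \<bar>pd k (\<lambda>y. v y * H y $ i $ j) x\<bar>) < C"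
    if "x \<in> interior P" for x i j
  proof -
    have "v x powr (\<epsilon> - 1) * (\<Sum>k\<in>UNIV. \<bar>pd k (\<lambda>y. v y * H y $ i $ j) x\<bar>)
        = (\<Sum>k\<in>UNIV. v x powr (\<epsilon> - 1) * \<bar>pd k (\<lambda>y. v y * H y $ i $ j) x\<bar>)"
      by (simp add: sum_distrib_left)
    also have "\<dots> \<le> (\<Sum>k\<in>(UNIV::'n set). B)" by (rule sum_mono) (rule key[OF that])
    finally show ?thesis unfolding C_def by simp
  qed
  have S2: "v x powr (\<epsilon> - 1) * (\<Sum>i\<in>UNIV. \<bar>pd i (\<lambda>y. v y * H y $ i $ j) x\<bar>) < C"
    if "x \<in> interior P" for x j
  proof -
    have "v x powr (\<epsilon> - 1) * (\<Sum>i\<in>UNIV. \<bar>pd i (\<lambda>y. v y * H y $ i $ j) x\<bar>)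
        = (\<Sum>i\<in>UNIV. v x powr (\<epsilon> - 1) * \<bar>pd i (\<lambda>y. v y * H y $ i $ j) x\<bar>)"
      by (simp add: sum_distrib_left)
    also have "\<dots> \<le> (\<Sum>i\<in>(UNIV::'n set). B)" by (rule sum_mono) (rule key[OF that])
    finally show ?thesis unfolding C_def by simp
  qed
  have "0 \<le> real CARD('n) * B" using B0 by simp
  hence "0 < C" unfolding C_def by linarith
  thus ?thesis using S1 S2 by blast
qed

end
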